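(* For every integer $D\ge 1$ there exists $n_0$ such that for all $n\ge n_0$ the following holds. If $\Gamma$ is a graph that contains as a subgraph every $D$-degenerate graph on $n$ vertices with maximum degree at most $2D+1$, then \[e(\Gamma)\ge \tfrac{1}{1000D}\,n^{2-1/D}.\]
   Context: A graph $H$ is $D$-degenerate if every induced subgraph of $H$ has a vertex of degree at most $D$; equivalently, there is an ordering $v_1,\dots,v_n$ of $V(H)$ such that each $v_i$ has at most $D$ neighbours among $v_1,\dots,v_{i-1}$. $e(\Gamma)$ denotes the number of edges of $\Gamma$. *)

theory Defs
  imports Complex_Main
begin

definition simple_graph :: "'a set \<Rightarrow> 'a set set \<Rightarrow> bool" where
  "simple_graph V E \<longleftrightarrow> finite V \<and> (\<forall>e\<in>E. \<exists>u v. u \<in> V \<and> v \<in> V \<and> u \<noteq> v \<and> e = {u, v})"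

definition num_edges :: "'a set set \<Rightarrow> nat" where
  "num_edges E = card E"

definition deg_in :: "'a set \<Rightarrow> 'a set set \<Rightarrow> 'a \<Rightarrow> nat" where
  "deg_in S E v = card {u \<in> S. {u, v} \<in> E}"

definition degenerate :: "nat \<Rightarrow> 'a set \<Rightarrow> 'a set set \<Rightarrow> bool" where
  "degenerate D V E \<longleftrightarrow> (\<forall>S. S \<subseteq> V \<and> S \<noteq> {} \<longrightarrow> (\<exists>v\<in>S. deg_in S E v \<le> D))"

definition max_degree_le :: "nat \<Rightarrow> 'a set \<Rightarrow> 'a set set \<Rightarrow> bool" where
  "max_degree_le k V E \<longleftrightarrow> (\<forall>v\<in>V. deg_in V E v \<le> k)"

definition contains_subgraph :: "'b set \<Rightarrow> 'b set set \<Rightarrow> 'a set \<Rightarrow> 'a set set \<Rightarrow> bool" where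
  "contains_subgraph V2 E2 V1 E1 \<longleftrightarrow>
     (\<exists>f. inj_on f V1 \<and> f ` V1 \<subseteq> V2 \<and> (\<forall>e\<in>E1. f ` e \<in> E2))"

end

theory Submission
  imports Defs "HOL-Combinatorics.Permutations"
begin


lemma pow_div_fact_le_exp:
  fixes x :: real assumes "x \<ge> 0"
  shows "x ^ n / fact n \<le> exp x"
proof -
  have s: "(\<lambda>k. x ^ k /\<^sub>R fact k) sums exp x" by (rule exp_converges)
  have "x ^ n / fact n = (\<Sum>k\<in>{n}. x ^ k /\<^sub>R fact k)" by (simp add: divide_inverse mult.commute)
  also have "\<dots> \<le> exp x"
    using s by (intro sum_le_suminf[THEN order_trans]) (auto simp: sums_iff assms)
  finally show ?thesis .
qed

lemma ln_fact_ge: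
  fixes x :: nat
  shows "real x * ln (real x) - real x \<le> ln (fact x)"
proof (cases "x = 0")
  case True then show ?thesis by simp
next
  case False
  then have xp: "real x > 0" by simp
  have "real x ^ x / fact x \<le> exp (real x)" by (rule pow_div_fact_le_exp) simp
  then have "real x ^ x \<le> exp (real x) * fact x" by (simp add: field_simps)
  then have "ln (real x ^ x) \<le> ln (exp (real x) * fact x)"
    using xp by (subst ln_le_cancel_iff) auto
  then show ?thesis using xp by (simp add: ln_mult ln_realpow)
qed



lemma geom_sum_DT:
  fixes D :: nat
  shows "(\<Sum>j<T. real D ^ (T - Suc j) * (real D + 1) ^ j) = (real D + 1) ^ T - real D ^ T"
  using power_diff_sumr2[of "real D + 1" T "real D"] by simp

lemma weighted_sum_DT:
  fixes D :: nat
  shows "(\<Sum>i<T. real i * real D ^ i * (real D + 1) ^ (T - Suc i)) + real D ^ T * (real T + real D)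
         = real D * (real D + 1) ^ T"
proof (induction T)
  case 0 then show ?case by simp
next
  case (Suc T)
  have "(\<Sum>i<Suc T. real i * real D ^ i * (real D + 1) ^ (Suc T - Suc i))
      = (\<Sum>i<T. real i * real D ^ i * (real D + 1) ^ (T - i)) + real T * real D ^ T"
    by simp
  also have "(\<Sum>i<T. real i * real D ^ i * (real D + 1) ^ (T - i))
      = (real D + 1) * (\<Sum>i<T. real i * real D ^ i * (real D + 1) ^ (T - Suc i))"
  proof (subst sum_distrib_left, rule sum.cong)
    fix i assume "i \<in> {..<T}"
    then have "T - i = Suc (T - Suc i)" by auto
    then show "real i * real D ^ i * (real D + 1) ^ (T - i) =
      (real D + 1) * (real i * real D ^ i * (real D + 1) ^ (T - Suc i))" by simp
  qed simp
  finally show ?case using Suc.IH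
    by (simp add: algebra_simps) (smt (verit) Suc.IH distrib_left mult.commute mult.left_commute)
qed


lemma xj_ln_bound:
  fixes D c T j :: nat
  assumes D1: "D \<ge> 1" and c1: "c \<ge> 1" and jT: "j < T"
  shows "ln (real (c * D ^ (T - Suc j) * (D+1) ^ j))
         \<ge> ln (real c * (real D + 1) ^ (T - 1)) - real (T - Suc j) / real D"
proof -
  define i where "i = T - Suc j"
  have Ti: "T - 1 = i + j" using jT by (simp add: i_def)
  have Dp: "real D > 0" using D1 by simp
  have q: "exp (- 1 / real D) \<le> real D / (real D + 1)"
  proof -
    have "1 + 1 / real D \<le> exp (1 / real D)" by (rule exp_ge_add_one_self)
    then have "(real D + 1) / real D \<le> exp (1 / real D)" using Dp by (simp add: field_simps)
    then have "inverse (exp (1 / real D)) \<le> inverse ((real D + 1) / real D)"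
      using Dp by (intro le_imp_inverse_le) auto
    then show ?thesis by (simp add: exp_minus[symmetric])
  qed
  have "exp (- real i / real D) = exp (- 1 / real D) ^ i"
    by (simp add: exp_of_nat_mult[symmetric])
  also have "\<dots> \<le> (real D / (real D + 1)) ^ i"
    by (intro power_mono q) simp
  finally have e: "exp (- real i / real D) \<le> (real D / (real D + 1)) ^ i" .
  have "real c * (real D + 1) ^ (T - 1) * (real D / (real D + 1)) ^ i
        = real c * real D ^ i * (real D + 1) ^ j"
    unfolding Ti by (simp add: power_add power_divide field_simps)
  also have "\<dots> = real (c * D ^ (T - Suc j) * (D+1) ^ j)" by (simp add: i_def add.commute)
  finally have eq: "real c * (real D + 1) ^ (T - 1) * (real D / (real D + 1)) ^ i
        = real (c * D ^ (T - Suc j) * (D+1) ^ j)" .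
  have pos: "real c * (real D + 1) ^ (T - 1) > 0" using c1 by simp
  have "ln (real c * (real D + 1) ^ (T - 1)) - real i / real D
        = ln (real c * (real D + 1) ^ (T - 1) * exp (- real i / real D))"
    using pos by (subst ln_mult) auto
  also have "\<dots> \<le> ln (real c * (real D + 1) ^ (T - 1) * (real D / (real D + 1)) ^ i)"
    using pos e Dp by (subst ln_le_cancel_iff) (auto intro: mult_left_mono mult_pos_pos)
  finally have fin: "ln (real c * (real D + 1) ^ (T - 1)) - real i / real D
     \<le> ln (real c * (real D + 1) ^ (T - 1) * (real D / (real D + 1)) ^ i)" .
  show ?thesis using fin unfolding eq by (simp add: i_def)
qed


lemma numeric_main:
  fixes D T c n m K k N l0 :: nat and x :: "nat \<Rightarrow> nat"
  assumes D1: "D \<ge> 1" and T1: "T \<ge> 1" and c1: "c \<ge> 1"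
    and xdef: "\<And>j. x j = c * D ^ (T - Suc j) * (D+1) ^ j"
    and Kdef: "K = (\<Sum>j<T. x j)" and kdef: "k = D * (D+1) * K"
    and l0def: "l0 = c * D ^ T" and Ndef: "N = l0 + (D+1) * K"
    and cnt: "(\<Prod>j<T. fact (x j) ^ (D*(D+1))) \<le> (m choose k) * N ^ N"
    and Nn: "N \<le> n" "9 * n \<le> 10 * N"
    and l0small: "real l0 * (ln (real n) + real D ^ 2 + 2 * real D) \<le> real N"
    and lnn: "ln (real n) \<ge> 10"
  shows "real m \<ge> 1 / (1000 * real D) * real n powr (2 - 1 / real D)"
proof (rule ccontr)
  assume "\<not> ?thesis"
  then have mlt: "real m < 1 / (1000 * real D) * real n powr (2 - 1 / real D)" by simp
  define d where "d = real D"
  have d1: "d \<ge> 1" using D1 by (simp add: d_def)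
  define X where "X = real c * (d + 1) ^ (T - 1)"
  have Xpos: "X > 0" using c1 d1 by (simp add: X_def)
  have xr: "\<And>j. real (x j) = real c * d ^ (T - Suc j) * (d + 1) ^ j" by (simp add: xdef d_def add.commute)
  have Kr: "real K = real c * ((d + 1) ^ T - d ^ T)"
    using geom_sum_DT[of D T] by (simp add: Kdef xr d_def sum_distrib_left[symmetric] mult.assoc)
  have kr: "real k = d * (d + 1) * real K" by (simp add: kdef d_def algebra_simps)
  have l0r: "real l0 = real c * d ^ T" by (simp add: l0def d_def)
  have Nr: "real N = real l0 + (d + 1) * real K" by (simp add: Ndef d_def algebra_simps)
  have pT: "(d + 1) ^ T = (d + 1) * (d + 1) ^ (T - 1)" using T1 by (simp add: power_eq_if)
  have NX: "real N \<le> (d + 1) ^ 2 * X"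
  proof -
    have "real N = real c * ((d+1) * (d + 1) ^ T - d * d ^ T)" unfolding Nr Kr l0r by (simp add: algebra_simps)
    also have "\<dots> \<le> real c * ((d+1) * (d + 1) ^ T)" using d1 by (intro mult_left_mono) auto
    also have "\<dots> = (d + 1) ^ 2 * X" unfolding X_def pT by (simp add: power2_eq_square)
    finally show ?thesis .
  qed
  have npos: "real n > 0" using lnn by (cases "n = 0") auto
  have Npos: "real N > 0" using Nn npos by linarith
  have l0le: "10 * real l0 \<le> real N"
  proof -
    have h: "(10::real) \<le> ln (real n) + real D ^ 2 + 2 * real D"
      using lnn zero_le_power2[of "real D"] by linarith
    have "real l0 * 10 \<le> real l0 * (ln (real n) + real D ^ 2 + 2 * real D)"
      using h by (intro mult_left_mono) auto
    then show ?thesis using l0small by linarith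
  qed
  have kN: "real k = d * (real N - real l0)" unfolding kr Nr by simp
  have kpos: "real k > 0" using kN l0le Npos d1 by (simp add: mult_pos_pos)
  have big: "1000 * d * X * real k \<ge> 81 * real n ^ 2"
  proof -
    have "d * (10 * real l0) \<le> d * real N" using l0le d1 by (intro mult_left_mono) auto
    then have k9: "real k \<ge> 9/10 * d * real N" unfolding kN by (simp add: algebra_simps)
    have X1: "X \<ge> real N / (d + 1) ^ 2" using NX d1 by (simp add: field_simps)
    have "1000 * d * X * real k \<ge> 1000 * d * (real N / (d + 1) ^ 2) * (9/10 * d * real N)"
      using k9 X1 d1 Npos Xpos by (intro mult_mono) (auto simp: mult_nonneg_nonneg)
    moreover have q: "(d / (d+1)) ^ 2 \<ge> 1/4"
    proof -
      have "d / (d+1) \<ge> 1/2" using d1 by (simp add: field_simps)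
      then have "(1/2) ^ 2 \<le> (d / (d+1)) ^ 2" by (intro power_mono) auto
      then show ?thesis by (simp add: power2_eq_square)
    qed
    moreover have "1000 * d * (real N / (d + 1) ^ 2) * (9/10 * d * real N)
        = 900 * (d / (d+1)) ^ 2 * real N ^ 2" by (simp add: power2_eq_square field_simps)
    moreover have "900 * (d / (d+1)) ^ 2 * real N ^ 2 \<ge> 900 * (1/4) * real N ^ 2"
      using q by (intro mult_right_mono) auto
    moreover have "real N ^ 2 \<ge> (9/10 * real n) ^ 2" using Nn npos by (intro power_mono) auto
    moreover have "(9/10 * real n) ^ 2 = 81/100 * real n ^ 2" by (simp add: power2_eq_square)
    moreover have "real n ^ 2 \<ge> 0" by simp
    ultimately show ?thesis by linarith
  qed
  have m0: "m > 0"
  proof (rule ccontr)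
    assume "\<not> m > 0"
    then have "m = 0" by simp
    have "k > 0" using kpos by simp
    then have mk: "(m choose k) = 0" using \<open>m = 0\<close> by simp
    have "(\<Prod>j<T. fact (x j) ^ (D*(D+1))) \<le> (0::nat)" using cnt unfolding mk by simp
    moreover have "(\<Prod>j<T. fact (x j) ^ (D*(D+1))) > (0::nat)" by (simp add: prod_pos)
    ultimately show False by simp
  qed
  have cnt2: "real (\<Prod>j<T. fact (x j) ^ (D*(D+1))) * fact k \<le> real m ^ k * real N ^ N"
  proof -
    have "(\<Prod>j<T. fact (x j) ^ (D*(D+1))) * fact k \<le> (m choose k) * fact k * N ^ N"
      using cnt by (simp add: algebra_simps)
    also have "\<dots> \<le> m ^ k * N ^ N" by (intro mult_right_mono binomial_fact_pow) auto
    finally have "(\<Prod>j<T. fact (x j) ^ (D*(D+1))) * fact k \<le> m ^ k * N ^ N" .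
    then have "real ((\<Prod>j<T. fact (x j) ^ (D*(D+1))) * fact k) \<le> real (m ^ k * N ^ N)"
      by (simp only: of_nat_le_iff)
    then show ?thesis by simp
  qed
  have lncnt: "d * (d+1) * (\<Sum>j<T. ln (fact (x j))) + ln (fact k) \<le> real k * ln (real m) + real N * ln (real N)"
  proof -
    have "ln (real (\<Prod>j<T. fact (x j) ^ (D*(D+1))) * fact k) \<le> ln (real m ^ k * real N ^ N)"
      using cnt2 m0 Npos by (subst ln_le_cancel_iff) (auto simp: prod_pos)
    moreover have "ln (real (\<Prod>j<T. fact (x j) ^ (D*(D+1))) * fact k)
       = d * (d+1) * (\<Sum>j<T. ln (fact (x j))) + ln (fact k)"
      by (simp add: ln_mult prod_pos ln_prod ln_realpow d_def sum_distrib_left algebra_simps)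
    moreover have "ln (real m ^ k * real N ^ N) = real k * ln (real m) + real N * ln (real N)"
      using m0 Npos by (simp add: ln_mult ln_realpow)
    ultimately show ?thesis by simp
  qed
  have S2: "(\<Sum>j<T. ln (fact (x j))) \<ge> real K * ln X - real c * (d + 1) ^ T - real K"
  proof -
    have e1: "\<And>j. j < T \<Longrightarrow> ln (fact (x j)) \<ge> real (x j) * ln X - real (x j) * real (T - Suc j) / d - real (x j)"
    proof -
      fix j assume jT: "j < T"
      have l: "ln (real (x j)) \<ge> ln X - real (T - Suc j) / d"
        using xj_ln_bound[OF D1 c1 jT] by (simp add: xdef X_def d_def)
      have "real (x j) * ln (real (x j)) \<ge> real (x j) * (ln X - real (T - Suc j) / d)"
        using l by (intro mult_left_mono) auto
      then show "ln (fact (x j)) \<ge> real (x j) * ln X - real (x j) * real (T - Suc j) / d - real (x j)"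
        using ln_fact_ge[of "x j"] by (simp add: algebra_simps)
    qed
    have wsum: "(\<Sum>j<T. real (x j) * real (T - Suc j)) \<le> real c * d * (d + 1) ^ T"
    proof -
      have "(\<Sum>j<T. real (x j) * real (T - Suc j))
          = real c * (\<Sum>j<T. real (T - Suc j) * d ^ (T - Suc j) * (d + 1) ^ j)"
        by (simp add: xr sum_distrib_left algebra_simps)
      also have "(\<Sum>j<T. real (T - Suc j) * d ^ (T - Suc j) * (d + 1) ^ j)
          = (\<Sum>i<T. real i * d ^ i * (d + 1) ^ (T - Suc i))"
      proof -
        have "(\<Sum>i<T. real i * d ^ i * (d + 1) ^ (T - Suc i))
            = (\<Sum>j<T. real (T - Suc j) * d ^ (T - Suc j) * (d + 1) ^ (T - Suc (T - Suc j)))"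
          by (rule sum.nat_diff_reindex[symmetric])
        also have "\<dots> = (\<Sum>j<T. real (T - Suc j) * d ^ (T - Suc j) * (d + 1) ^ j)"
          by (rule sum.cong) auto
        finally show ?thesis by simp
      qed
      also have "(\<Sum>i<T. real i * d ^ i * (d + 1) ^ (T - Suc i)) = d * (d + 1) ^ T - d ^ T * (real T + d)"
        using weighted_sum_DT[of D T] by (simp add: d_def eq_diff_eq)
      also have "\<dots> \<le> d * (d + 1) ^ T" using d1 by simp
      finally show ?thesis using c1 by (simp add: mult_left_mono mult.assoc)
    qed
    have f1: "(\<Sum>j<T. ln (fact (x j))) \<ge> (\<Sum>j<T. real (x j) * ln X - real (x j) * real (T - Suc j) / d - real (x j))"
      using e1 by (intro sum_mono) auto
    have f2: "(\<Sum>j<T. real (x j) * ln X - real (x j) * real (T - Suc j) / d - real (x j))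
        = real K * ln X - (\<Sum>j<T. real (x j) * real (T - Suc j)) / d - real K"
      by (simp add: Kdef sum_subtractf sum_distrib_right sum_divide_distrib)
    have f3: "(\<Sum>j<T. real (x j) * real (T - Suc j)) / d \<le> real c * (d + 1) ^ T"
      using wsum d1 by (simp add: field_simps)
    show ?thesis using f1 f2 f3 by linarith
  qed
  have kc: "d * (d + 1) * (real c * (d + 1) ^ T) = real k + d * (d + 1) * real l0"
    unfolding kr Kr l0r by (simp add: algebra_simps)
  have S2': "d * (d+1) * (\<Sum>j<T. ln (fact (x j))) \<ge> real k * ln X - (real k + d * (d + 1) * real l0) - real k"
  proof -
    have "d * (d+1) * (\<Sum>j<T. ln (fact (x j))) \<ge> d * (d+1) * (real K * ln X - real c * (d + 1) ^ T - real K)"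
      using S2 d1 by (intro mult_left_mono) auto
    also have "d * (d+1) * (real K * ln X - real c * (d + 1) ^ T - real K)
       = real k * ln X - d * (d + 1) * (real c * (d + 1) ^ T) - real k"
      unfolding kr by (simp add: algebra_simps)
    finally show ?thesis unfolding kc .
  qed
  have S3: "ln (fact k) \<ge> real k * ln (real k) - real k" by (rule ln_fact_ge)
  have lnM: "ln (1 / (1000 * real D) * real n powr (2 - 1 / real D)) = (2 - 1/d) * ln (real n) - ln (1000 * d)"
    using npos d1 by (simp add: ln_mult ln_div d_def)
  have lnm: "ln (real m) < (2 - 1/d) * ln (real n) - ln (1000 * d)"
    using mlt m0 unfolding lnM[symmetric] by (subst ln_less_cancel_iff) auto
  have S4: "real k * ln (real m) < 2 * real k * ln (real n) - real k / d * ln (real n) - real k * ln (1000 * d)"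
  proof -
    have "real k * ln (real m) < real k * ((2 - 1/d) * ln (real n) - ln (1000 * d))"
      using lnm kpos by (intro mult_strict_left_mono) auto
    then show ?thesis by (simp add: algebra_simps)
  qed
  have S5: "real N * ln (real N) \<le> real l0 * ln (real n) + real k / d * ln (real n)"
  proof -
    have "ln (real N) \<le> ln (real n)" using Npos Nn by simp
    then have "real N * ln (real N) \<le> real N * ln (real n)" using Npos by (intro mult_left_mono) auto
    moreover have b: "real N = real l0 + real k / d" using kN d1 by (simp add: field_simps)
    moreover have "real N * ln (real n) = real l0 * ln (real n) + real k / d * ln (real n)"
      unfolding b by (simp add: algebra_simps)
    ultimately show ?thesis by linarith
  qed
  have S6: "real k * ln X + real k * ln (real k) + real k * ln (1000 * d) \<ge> 4 * real k + 2 * real k * ln (real n)"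
  proof -
    have e4: "exp 4 \<le> (81::real)"
    proof -
      have "exp (4::real) = exp 1 ^ 4" by (simp add: exp_of_nat_mult[symmetric])
      also have "\<dots> \<le> 3 ^ 4" by (intro power_mono exp_le) auto
      finally show ?thesis by simp
    qed
    have "4 + 2 * ln (real n) \<le> ln 81 + ln (real n ^ 2)"
      using e4 npos by (simp add: ln_realpow ln_ge_iff)
    also have "\<dots> = ln (81 * real n ^ 2)" using npos by (simp add: ln_mult)
    also have "\<dots> \<le> ln (1000 * d * X * real k)" using big npos Xpos kpos d1 by (subst ln_le_cancel_iff) (auto simp: mult_pos_pos)
    also have "\<dots> = ln X + ln (real k) + ln (1000 * d)" using d1 Xpos kpos by (simp add: ln_mult)
    finally have "4 + 2 * ln (real n) \<le> ln X + ln (real k) + ln (1000 * d)" .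
    then have "real k * (4 + 2 * ln (real n)) \<le> real k * (ln X + ln (real k) + ln (1000 * d))"
      using kpos by (intro mult_left_mono) auto
    then show ?thesis by (simp add: algebra_simps)
  qed
  have S7: "real k \<ge> real l0 * ln (real n) + d * (d + 1) * real l0"
  proof -
    have "real k = d * (real N - real l0)" by (rule kN)
    also have "\<dots> \<ge> real N - real l0" using d1 l0le Npos by (smt (verit) mult_le_cancel_right1)
    finally have "real k \<ge> real N - real l0" .
    moreover have "real N \<ge> real l0 * (ln (real n) + d ^ 2 + 2 * d)" using l0small by (simp add: d_def)
    moreover have "real l0 * (ln (real n) + d ^ 2 + 2 * d) - real l0 \<ge> real l0 * ln (real n) + d * (d + 1) * real l0"
    proof -
      have "real l0 * 1 \<le> real l0 * d" using d1 by (intro mult_left_mono) auto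
      then show ?thesis by (simp add: algebra_simps power2_eq_square)
    qed
    ultimately show ?thesis by linarith
  qed
  show False using lncnt S2' S3 S4 S5 S6 S7 by linarith
qed


lemma quad_bernoulli:
  fixes x :: real assumes "x \<ge> 0"
  shows "(1 + x) ^ n \<ge> 1 + real n * x + real n * (real n - 1) / 2 * x ^ 2"
proof (induction n)
  case 0 then show ?case by simp
next
  case (Suc n)
  have "(1 + x) ^ Suc n = (1 + x) * (1 + x) ^ n" by simp
  also have "\<dots> \<ge> (1 + x) * (1 + real n * x + real n * (real n - 1) / 2 * x ^ 2)"
    using Suc.IH assms by (intro mult_left_mono) auto
  finally have a: "(1 + x) ^ Suc n \<ge> (1 + x) * (1 + real n * x + real n * (real n - 1) / 2 * x ^ 2)" .
  have b: "(1 + x) * (1 + real n * x + real n * (real n - 1) / 2 * x ^ 2)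
     = 1 + real (Suc n) * x + real (Suc n) * (real (Suc n) - 1) / 2 * x ^ 2 + real n * (real n - 1) / 2 * x ^ 3"
    by (simp add: field_simps power2_eq_square power3_eq_cube)
  have c: "real n * (real n - 1) / 2 * x ^ 3 \<ge> 0"
    using assms by (cases n) auto
  show ?case using a b c by linarith
qed

definition QQ :: "nat \<Rightarrow> nat \<Rightarrow> nat" where
  "QQ D T = D ^ T + (D+1) * (\<Sum>j<T. D ^ (T - Suc j) * (D+1) ^ j)"

lemma QQ_real: "real (QQ D T) = (real D + 1) ^ (T+1) - real D ^ (T+1)"
proof -
  define S where "S = (\<Sum>j<T. real D ^ (T - Suc j) * (real D + 1) ^ j)"
  have hS: "S = (real D + 1) ^ T - real D ^ T"
    using power_diff_sumr2[of "real D + 1" T "real D"] by (simp add: S_def)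
  have "real (QQ D T) = real D ^ T + (real D + 1) * S"
    by (simp add: QQ_def S_def algebra_simps)
  also have "\<dots> = (real D + 1) ^ (T+1) - real D ^ (T+1)" unfolding hS by (simp add: algebra_simps)
  finally show ?thesis .
qed

lemma QQ_bounds:
  shows "real (QQ D T) \<le> (real D + 1) ^ (T+1)" "real (QQ D T) \<ge> (real D + 1) ^ T"
proof -
  show "real (QQ D T) \<le> (real D + 1) ^ (T+1)" unfolding QQ_real by simp
  have "real D ^ T \<le> (real D + 1) ^ T" by (intro power_mono) auto
  then have "real D * real D ^ T \<le> real D * (real D + 1) ^ T" by (intro mult_left_mono) auto
  then show "real (QQ D T) \<ge> (real D + 1) ^ T" unfolding QQ_real by (simp add: algebra_simps)
qed

lemma params_exist:
  fixes D :: nat assumes D1: "D \<ge> 1"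
  shows "\<exists>n0. \<forall>n\<ge>n0. \<exists>T. T \<ge> 1 \<and> 10 * QQ D T \<le> n
        \<and> real D ^ T * (ln (real n) + real D ^ 2 + 2 * real D) \<le> real (QQ D T) \<and> ln (real n) \<ge> 10"
proof -
  define d where "d = real D"
  have d1: "d \<ge> 1" using D1 by (simp add: d_def)
  define a where "a = 2 * ln (d + 1)"
  have apos: "a > 0" using d1 by (simp add: a_def)
  define Z where "Z = 1 + 4 * d^2 * a + 2 * d^2 * (d^2 + 2 * d)"
  define n0 where "n0 = max (nat \<lceil>exp (max 10 (a * (Z + 1)))\<rceil>) (100 * (D+1)^2)"
  show ?thesis
  proof (rule exI[of _ n0], intro allI impI)
    fix n assume nn0: "n \<ge> n0"
    define y where "y = ln (real n)"
    have n_exp: "real n \<ge> exp (max 10 (a * (Z + 1)))"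
    proof -
      have "nat \<lceil>exp (max 10 (a * (Z + 1)))\<rceil> \<le> n" using nn0 unfolding n0_def by simp
      then have "real n \<ge> real (nat \<lceil>exp (max 10 (a * (Z + 1)))\<rceil>)" by linarith
      moreover have "real (nat \<lceil>exp (max 10 (a * (Z + 1)))\<rceil>) \<ge> exp (max 10 (a * (Z + 1)))"
        by (rule real_nat_ceiling_ge)
      ultimately show ?thesis by linarith
    qed
    have npos: "real n > 0" using n_exp by (smt (verit) exp_gt_zero)
    have ybig: "y \<ge> max 10 (a * (Z + 1))" using n_exp npos unfolding y_def by (metis exp_ln exp_le_cancel_iff)
    have n100: "real n \<ge> 100 * (d + 1) ^ 2"
    proof -
      have "n \<ge> 100 * (D+1)^2" using nn0 unfolding n0_def by simp
      then have "real n \<ge> real (100 * (D+1)^2)" by linarith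
      then show ?thesis by (simp add: d_def add.commute)
    qed
    define T where "T = nat \<lfloor>y / a\<rfloor>"
    have Tle: "real T \<le> y / a" using ybig apos unfolding T_def
      by (smt (verit, best) divide_nonneg_pos of_int_floor_le of_nat_nat zero_le_floor)
    have Tge: "real T \<ge> y / a - 1" unfolding T_def by linarith
    have h1: "a * (Z + 1) \<le> y" using ybig by simp
    have h2: "y \<le> a * (real T + 1)" using Tge apos by (simp add: field_simps)
    have "a * (Z + 1) \<le> a * (real T + 1)" using h1 h2 by linarith
    then have TZ: "real T \<ge> Z" using apos by (simp add: mult_le_cancel_left_pos)
    have Z1: "Z \<ge> 1" unfolding Z_def using apos d1 by (simp add: add_nonneg_nonneg)
    have T1: "T \<ge> 1" using TZ Z1 by linarith
    have pw: "(d + 1) ^ T \<le> sqrt (real n)"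
    proof -
      have "(d + 1) ^ T = exp (real T * ln (d + 1))" using d1 by (simp add: exp_of_nat_mult)
      also have "\<dots> \<le> exp (y / 2)"
        using Tle apos unfolding a_def by (simp add: field_simps)
      also have "exp (y / 2) = sqrt (real n)" unfolding y_def using npos
        by (simp add: powr_half_sqrt[symmetric] powr_def)
      finally show ?thesis .
    qed
    show "\<exists>T. T \<ge> 1 \<and> 10 * QQ D T \<le> n
        \<and> real D ^ T * (ln (real n) + real D ^ 2 + 2 * real D) \<le> real (QQ D T) \<and> ln (real n) \<ge> 10"
    proof (intro exI conjI)
      show "T \<ge> 1" by (rule T1)
      show "ln (real n) \<ge> 10" using ybig unfolding y_def by simp
      have sq: "sqrt (real n) \<ge> 10 * (d + 1)"
      proof -
        have "sqrt (100 * (d + 1) ^ 2) \<le> sqrt (real n)" using n100 by (subst real_sqrt_le_iff) auto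
        moreover have "sqrt (100 * (d + 1) ^ 2) = 10 * (d + 1)" using d1
          by (simp add: real_sqrt_mult)
        ultimately show ?thesis by simp
      qed
      have "real (10 * QQ D T) \<le> 10 * (d + 1) ^ (T + 1)" using QQ_bounds(1)[of D T] by (simp add: d_def)
      also have "\<dots> = 10 * (d + 1) * (d + 1) ^ T" by simp
      also have "\<dots> \<le> 10 * (d + 1) * sqrt (real n)" using pw d1 by (intro mult_left_mono) auto
      also have "\<dots> \<le> sqrt (real n) * sqrt (real n)" using sq by (intro mult_right_mono) auto
      also have "\<dots> = real n" using npos by simp
      finally show "10 * QQ D T \<le> n" by linarith
      define L where "L = ln (real n) + d ^ 2 + 2 * d"
      have quad: "(1 + 1/d) ^ T \<ge> real T * (real T - 1) / 2 * (1/d) ^ 2"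
      proof -
        have "(1 + 1/d) ^ T \<ge> 1 + real T * (1/d) + real T * (real T - 1) / 2 * (1/d) ^ 2"
          by (rule quad_bernoulli) (use d1 in simp)
        moreover have "1 + real T * (1/d) \<ge> 0" using d1 by simp
        ultimately show ?thesis by linarith
      qed
      have TT: "real T * (real T - 1) \<ge> 2 * d^2 * L"
      proof -
        have "real T - 1 \<ge> Z - 1" using TZ by simp
        then have "real T * (real T - 1) \<ge> real T * (Z - 1)" using T1 by (intro mult_left_mono) auto
        moreover have "Z - 1 = 2 * d^2 * a + (2 * d^2 * a + 2 * d^2 * (d^2 + 2 * d))" unfolding Z_def by simp
        moreover have "real T * (2 * d^2 * a + 2 * d^2 * (d^2 + 2 * d)) \<ge> 1 * (2 * d^2 * a + 2 * d^2 * (d^2 + 2 * d))"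
          using T1 apos d1 by (intro mult_right_mono) auto
        moreover have "L \<le> a * (real T + 1) + d^2 + 2 * d" using h2 unfolding L_def y_def by simp
        moreover have "2 * d^2 * L \<le> 2 * d^2 * (a * (real T + 1) + d^2 + 2 * d)"
          using calculation(4) by (intro mult_left_mono) auto
        ultimately show ?thesis by (simp add: algebra_simps)
      qed
      have "(1 + 1/d) ^ T \<ge> L"
      proof -
        have "real T * (real T - 1) / 2 * (1/d) ^ 2 \<ge> (2 * d^2 * L) / 2 * (1/d) ^ 2"
          using TT by (intro mult_right_mono divide_right_mono) auto
        also have "(2 * d^2 * L) / 2 * (1/d) ^ 2 = L" using d1 by (simp add: field_simps)
        finally show ?thesis using quad by linarith
      qed
      then have "d ^ T * L \<le> d ^ T * (1 + 1/d) ^ T" using d1 by (intro mult_left_mono) auto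
      also have "d ^ T * (1 + 1/d) ^ T = (d + 1) ^ T" using d1
        by (simp add: power_mult_distrib[symmetric] field_simps)
      also have "\<dots> \<le> real (QQ D T)" using QQ_bounds(2)[of D T] by (simp add: d_def)
      finally show "real D ^ T * (ln (real n) + real D ^ 2 + 2 * real D) \<le> real (QQ D T)"
        by (simp add: L_def d_def)
    qed
  qed
qed



lemma count_embed:
  fixes Fam :: "'v set set set" and S :: "'v set" and E :: "'w set set"
  assumes finS: "finite S" and finE: "finite E"
    and props: "\<And>G. G \<in> Fam \<Longrightarrow> card G = k \<and> \<Union>G = S"
    and emb: "\<And>G. G \<in> Fam \<Longrightarrow> \<exists>g. inj_on g S \<and> (\<forall>e\<in>G. g ` e \<in> E)"
  shows "card Fam \<le> (card E choose k) * card S ^ card S"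
proof -
  define gg where "gg G = (SOME g. inj_on g S \<and> (\<forall>e\<in>G. g ` e \<in> E))" for G
  have ggp: "inj_on (gg G) S \<and> (\<forall>e\<in>G. gg G ` e \<in> E)" if "G \<in> Fam" for G
    unfolding gg_def using someI_ex[OF emb[OF that]] .
  define Phi where "Phi G = ((`) (gg G) ` G, restrict (gg G) S)" for G
  define Idxs where "Idxs = {F. F \<subseteq> E \<and> card F = k \<and> finite (\<Union>F) \<and> card (\<Union>F) \<le> card S}"
  define Tgt where "Tgt = Sigma Idxs (\<lambda>F. PiE S (\<lambda>_. \<Union>F))"
  have finIdxs: "finite Idxs"
    by (rule finite_subset[of _ "Pow E"]) (auto simp: Idxs_def finE)
  have finTgt: "finite Tgt" unfolding Tgt_def
    by (intro finite_SigmaI finIdxs finite_PiE finS) (auto simp: Idxs_def)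
  have sub: "\<And>G e. G \<in> Fam \<Longrightarrow> e \<in> G \<Longrightarrow> e \<subseteq> S" using props by blast
  have maps: "Phi ` Fam \<subseteq> Tgt"
  proof
    fix z assume "z \<in> Phi ` Fam"
    then obtain G where G: "G \<in> Fam" and z: "z = Phi G" by blast
    define g where "g = gg G"
    have inj: "inj_on g S" and gE: "\<forall>e\<in>G. g ` e \<in> E" using ggp[OF G] by (auto simp: g_def)
    have injG: "inj_on ((`) g) G"
    proof
      fix e1 e2 assume "e1 \<in> G" "e2 \<in> G" "g ` e1 = g ` e2"
      then show "e1 = e2" using inj_on_image_eq_iff[OF inj] sub[OF G] by blast
    qed
    have U0: "\<Union>G = S" using props[OF G] by simp
    have U: "\<Union>((`) g ` G) = g ` S" unfolding U0[symmetric] by (simp add: image_Union)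
    have "(`) g ` G \<in> Idxs"
      unfolding Idxs_def using gE card_image[OF injG] props[OF G] U finS card_image_le[OF finS, of g]
      by auto
    moreover have "restrict g S \<in> PiE S (\<lambda>_. \<Union>((`) g ` G))" using U by auto
    ultimately show "z \<in> Tgt" unfolding z Phi_def Tgt_def g_def by auto
  qed
  have injPhi: "inj_on Phi Fam"
  proof
    fix G1 G2 assume G1: "G1 \<in> Fam" and G2: "G2 \<in> Fam" and eq: "Phi G1 = Phi G2"
    define g1 where "g1 = gg G1"
    define g2 where "g2 = gg G2"
    have inj1: "inj_on g1 S" using ggp[OF G1] by (simp add: g1_def)
    have inj2: "inj_on g2 S" using ggp[OF G2] by (simp add: g2_def)
    have F: "(`) g1 ` G1 = (`) g2 ` G2" and R: "restrict g1 S = restrict g2 S"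
      using eq unfolding Phi_def g1_def g2_def by auto
    have gv: "\<And>v. v \<in> S \<Longrightarrow> g1 v = g2 v" using R by (metis restrict_apply')
    have rec1: "G1 = {e. e \<subseteq> S \<and> g1 ` e \<in> (`) g1 ` G1}"
    proof
      show "G1 \<subseteq> {e. e \<subseteq> S \<and> g1 ` e \<in> (`) g1 ` G1}" using sub[OF G1] by blast
      show "{e. e \<subseteq> S \<and> g1 ` e \<in> (`) g1 ` G1} \<subseteq> G1"
      proof
        fix e assume "e \<in> {e. e \<subseteq> S \<and> g1 ` e \<in> (`) g1 ` G1}"
        then obtain e' where e: "e \<subseteq> S" and e': "e' \<in> G1" "g1 ` e = g1 ` e'" by blast
        then have "e = e'" using inj_on_image_eq_iff[OF inj1 e sub[OF G1 e'(1)]] by simp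
        then show "e \<in> G1" using e' by simp
      qed
    qed
    have rec2: "G2 = {e. e \<subseteq> S \<and> g2 ` e \<in> (`) g2 ` G2}"
    proof
      show "G2 \<subseteq> {e. e \<subseteq> S \<and> g2 ` e \<in> (`) g2 ` G2}" using sub[OF G2] by blast
      show "{e. e \<subseteq> S \<and> g2 ` e \<in> (`) g2 ` G2} \<subseteq> G2"
      proof
        fix e assume "e \<in> {e. e \<subseteq> S \<and> g2 ` e \<in> (`) g2 ` G2}"
        then obtain e' where e: "e \<subseteq> S" and e': "e' \<in> G2" "g2 ` e = g2 ` e'" by blast
        then have "e = e'" using inj_on_image_eq_iff[OF inj2 e sub[OF G2 e'(1)]] by simp
        then show "e \<in> G2" using e' by simp
      qed
    qed
    have "\<And>e. e \<subseteq> S \<Longrightarrow> g1 ` e = g2 ` e" using gv by (meson image_cong subsetD)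
    then have "{e. e \<subseteq> S \<and> g1 ` e \<in> (`) g1 ` G1} = {e. e \<subseteq> S \<and> g2 ` e \<in> (`) g2 ` G2}"
      using F by auto
    then show "G1 = G2" using rec1 rec2 by simp
  qed
  have "card Fam \<le> card Tgt" by (rule card_inj_on_le[OF injPhi maps finTgt])
  also have "card Tgt = (\<Sum>F\<in>Idxs. card (PiE S (\<lambda>_. \<Union>F)))"
    unfolding Tgt_def using finIdxs finS by (subst card_SigmaI) (auto simp: Idxs_def intro!: finite_PiE)
  also have "\<dots> = (\<Sum>F\<in>Idxs. card (\<Union>F) ^ card S)"
    using finS by (intro sum.cong refl) (simp add: card_PiE)
  also have "\<dots> \<le> (\<Sum>F\<in>Idxs. card S ^ card S)"
    by (intro sum_mono power_mono) (auto simp: Idxs_def)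
  also have "\<dots> = card Idxs * card S ^ card S" by simp
  also have "card Idxs \<le> card E choose k"
  proof -
    have "card Idxs \<le> card {F. F \<subseteq> E \<and> card F = k}"
      by (rule card_mono) (auto simp: Idxs_def finE)
    also have "\<dots> = card E choose k" by (rule n_subsets[OF finE])
    finally show ?thesis .
  qed
  then have "card Idxs * card S ^ card S \<le> (card E choose k) * card S ^ card S" by simp
  finally show ?thesis .
qed

lemma transfer_nbrs:
  fixes h :: "'v \<Rightarrow> nat"
  assumes inj: "inj_on h S"
    and simple: "\<And>e. e \<in> G \<Longrightarrow> \<exists>u v. u \<in> S \<and> v \<in> S \<and> u \<noteq> v \<and> e = {u, v}"
    and u: "{u, w} \<in> (`) h ` G"
  shows "\<exists>v y. v \<in> S \<and> y \<in> S \<and> w = h v \<and> u = h y \<and> {y, v} \<in> G"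
proof -
  obtain e where e: "e \<in> G" and ue: "{u, w} = h ` e" using u by blast
  obtain y1 y2 where y: "y1 \<in> S" "y2 \<in> S" "y1 \<noteq> y2" "e = {y1, y2}" using simple[OF e] by blast
  have hne: "h y1 \<noteq> h y2" using inj y by (meson inj_on_contraD)
  have "{u, w} = {h y1, h y2}" using ue y(4) by simp
  then have "(u = h y1 \<and> w = h y2) \<or> (u = h y2 \<and> w = h y1)"
    by (simp only: doubleton_eq_iff)
  then show ?thesis
  proof
    assume "u = h y1 \<and> w = h y2"
    then show ?thesis using y e by blast
  next
    assume "u = h y2 \<and> w = h y1"
    moreover have "{y2, y1} \<in> G" using y e by (simp add: insert_commute)
    ultimately show ?thesis using y by blast
  qed
qed

lemma transfer_deg:
  fixes h :: "'v \<Rightarrow> nat"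
  assumes inj: "inj_on h S" and finS: "finite S"
    and simple: "\<And>e. e \<in> G \<Longrightarrow> \<exists>u v. u \<in> S \<and> v \<in> S \<and> u \<noteq> v \<and> e = {u, v}"
    and v: "v \<in> S"
  shows "deg_in A ((`) h ` G) (h v) \<le> card {y \<in> S \<inter> h -` A. {y, v} \<in> G}"
proof -
  have "{u \<in> A. {u, h v} \<in> (`) h ` G} \<subseteq> h ` {y \<in> S \<inter> h -` A. {y, v} \<in> G}"
  proof
    fix u assume u: "u \<in> {u \<in> A. {u, h v} \<in> (`) h ` G}"
    then obtain v' y where vy: "v' \<in> S" "y \<in> S" "h v = h v'" "u = h y" "{y, v'} \<in> G"
      using transfer_nbrs[OF inj simple] by blast
    have "v' = v" using inj vy v by (metis inj_on_def)
    then show "u \<in> h ` {y \<in> S \<inter> h -` A. {y, v} \<in> G}" using vy u by auto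
  qed
  moreover have "finite (h ` {y \<in> S \<inter> h -` A. {y, v} \<in> G})" using finS by simp
  ultimately have "card {u \<in> A. {u, h v} \<in> (`) h ` G} \<le> card (h ` {y \<in> S \<inter> h -` A. {y, v} \<in> G})"
    by (intro card_mono)
  also have "\<dots> \<le> card {y \<in> S \<inter> h -` A. {y, v} \<in> G}" by (rule card_image_le) (use finS in simp)
  finally show ?thesis unfolding deg_in_def .
qed

lemma transfer_deg0:
  fixes h :: "'v \<Rightarrow> nat"
  assumes inj: "inj_on h S"
    and simple: "\<And>e. e \<in> G \<Longrightarrow> \<exists>u v. u \<in> S \<and> v \<in> S \<and> u \<noteq> v \<and> e = {u, v}"
    and w: "w \<notin> h ` S"
  shows "deg_in A ((`) h ` G) w = 0"
proof -
  have E: "{u \<in> A. {u, w} \<in> (`) h ` G} = {}"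
    using transfer_nbrs[OF inj simple] w by blast
  show ?thesis unfolding deg_in_def E by simp
qed

lemma transfer_graph:
  fixes h :: "'v \<Rightarrow> nat" and S :: "'v set" and G :: "'v set set"
  assumes inj: "inj_on h S" and hS: "h ` S \<subseteq> {0..<n}" and finS: "finite S"
    and simple: "\<And>e. e \<in> G \<Longrightarrow> \<exists>u v. u \<in> S \<and> v \<in> S \<and> u \<noteq> v \<and> e = {u, v}"
    and deg: "degenerate D S G" and md: "max_degree_le K S G"
  shows "simple_graph {0..<n} ((`) h ` G) \<and> degenerate D {0..<n} ((`) h ` G)
         \<and> max_degree_le K {0..<n} ((`) h ` G)"
proof (intro conjI)
  show "simple_graph {0..<n} ((`) h ` G)"
    unfolding simple_graph_def
  proof (intro conjI ballI)
    show "finite {0..<n}" by simp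
    fix e' assume "e' \<in> (`) h ` G"
    then obtain e where e: "e \<in> G" "e' = h ` e" by blast
    obtain y1 y2 where y: "y1 \<in> S" "y2 \<in> S" "y1 \<noteq> y2" "e = {y1, y2}" using simple[OF e(1)] by blast
    have "h y1 \<noteq> h y2" using inj y by (meson inj_on_contraD)
    moreover have "h y1 \<in> {0..<n}" "h y2 \<in> {0..<n}" using hS y by auto
    ultimately show "\<exists>u v. u \<in> {0..<n} \<and> v \<in> {0..<n} \<and> u \<noteq> v \<and> e' = {u, v}"
      using e y by auto
  qed
  show "degenerate D {0..<n} ((`) h ` G)"
    unfolding degenerate_def
  proof (intro allI impI)
    fix A assume A: "A \<subseteq> {0..<n} \<and> A \<noteq> {}"
    show "\<exists>w\<in>A. deg_in A ((`) h ` G) w \<le> D"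
    proof (cases "A \<inter> h ` S = {}")
      case True
      obtain w where "w \<in> A" using A by blast
      then have "w \<notin> h ` S" using True by blast
      then show ?thesis using transfer_deg0[where G=G, OF inj simple] \<open>w \<in> A\<close> by fastforce
    next
      case False
      define S' where "S' = S \<inter> h -` A"
      have "S' \<subseteq> S \<and> S' \<noteq> {}" using False unfolding S'_def by blast
      then obtain v where v: "v \<in> S'" "deg_in S' G v \<le> D" using deg unfolding degenerate_def by blast
      have "deg_in A ((`) h ` G) (h v) \<le> card {y \<in> S \<inter> h -` A. {y, v} \<in> G}"
        using transfer_deg[where G=G and A=A, OF inj finS simple v(1)[unfolded S'_def, THEN IntD1]] by simp
      also have "\<dots> = deg_in S' G v" unfolding deg_in_def S'_def by simp
      finally have "deg_in A ((`) h ` G) (h v) \<le> D" using v(2) by linarith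
      moreover have "h v \<in> A" using v(1) unfolding S'_def by simp
      ultimately show ?thesis by blast
    qed
  qed
  show "max_degree_le K {0..<n} ((`) h ` G)"
    unfolding max_degree_le_def
  proof
    fix w assume w: "w \<in> {0..<n}"
    show "deg_in {0..<n} ((`) h ` G) w \<le> K"
    proof (cases "w \<in> h ` S")
      case False
      then show ?thesis using transfer_deg0[where G=G, OF inj simple] by simp
    next
      case True
      then obtain v where v: "v \<in> S" "w = h v" by blast
      have "deg_in {0..<n} ((`) h ` G) w \<le> card {y \<in> S \<inter> h -` {0..<n}. {y, v} \<in> G}"
        using transfer_deg[where G=G and A="{0..<n}", OF inj finS simple v(1)] v(2) by simp
      also have "\<dots> \<le> card {y \<in> S. {y, v} \<in> G}" by (rule card_mono) (use finS in auto)
      also have "\<dots> \<le> K" using md v(1) unfolding max_degree_le_def deg_in_def by blast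
      finally show ?thesis .
    qed
  qed
qed



lemma divmod_unique_aux:
  fixes a r x :: nat assumes "r < x"
  shows "(a * x + r) div x = a" "(a * x + r) mod x = r"
  using assms by auto

lemma lin_inj:
  fixes a a' r r' x :: nat assumes "r < x" "r' < x" "a * x + r = a' * x + r'"
  shows "a = a' \<and> r = r'"
  using divmod_unique_aux[OF assms(1), of a] divmod_unique_aux[OF assms(2), of a'] assms(3) by metis

locale constr =
  fixes D T c :: nat
  assumes D1: "D \<ge> 1" and T1: "T \<ge> 1" and c1: "c \<ge> 1"
begin

definition cellsz :: "nat \<Rightarrow> nat" where "cellsz j = c * D ^ (T - Suc j) * (D+1) ^ j"
definition lvl :: "nat \<Rightarrow> nat" where "lvl j = c * D ^ (T - j) * (D+1) ^ j"
definition Vt :: "(nat \<times> nat) set" where "Vt = Sigma {..T} (\<lambda>j. {..<lvl j})"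
definition Ix :: "(nat \<times> nat \<times> nat) set" where "Ix = {..<T} \<times> ({..D} \<times> {..<D})"
definition Par :: "((nat \<times> nat \<times> nat) \<Rightarrow> nat \<Rightarrow> nat) set" where
  "Par = (\<Pi>\<^sub>E i\<in>Ix. {s. s permutes {..<cellsz (fst i)}})"
definition Idx :: "((nat \<times> nat \<times> nat) \<times> nat) set" where
  "Idx = Sigma Ix (\<lambda>i. {..<cellsz (fst i)})"
definition edg :: "((nat \<times> nat \<times> nat) \<Rightarrow> nat \<Rightarrow> nat) \<Rightarrow> (nat \<times> nat \<times> nat) \<times> nat \<Rightarrow> (nat \<times> nat) set" where
  "edg s q = {(Suc (fst (fst q)), fst (snd (fst q)) * cellsz (fst (fst q)) + snd q),
              (fst (fst q), snd (snd (fst q)) * cellsz (fst (fst q)) + s (fst q) (snd q))}"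
definition Gr :: "((nat \<times> nat \<times> nat) \<Rightarrow> nat \<Rightarrow> nat) \<Rightarrow> (nat \<times> nat) set set" where
  "Gr s = edg s ` Idx"

lemma cellsz_pos: "cellsz j > 0"
  using D1 c1 by (simp add: cellsz_def)

lemma lvl_eq1: "j < T \<Longrightarrow> lvl j = D * cellsz j"
proof -
  assume "j < T"
  then have "T - j = Suc (T - Suc j)" by simp
  then show ?thesis by (simp add: lvl_def cellsz_def)
qed

lemma lvl_eq2: "j < T \<Longrightarrow> lvl (Suc j) = (D+1) * cellsz j"
  by (simp add: lvl_def cellsz_def algebra_simps)

lemma Par_perm: "s \<in> Par \<Longrightarrow> (j,a,b) \<in> Ix \<Longrightarrow> s (j,a,b) permutes {..<cellsz j}"
  unfolding Par_def by (metis (mono_tags, lifting) PiE_mem fst_conv mem_Collect_eq)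

lemma Par_lt: "s \<in> Par \<Longrightarrow> (j,a,b) \<in> Ix \<Longrightarrow> r < cellsz j \<Longrightarrow> s (j,a,b) r < cellsz j"
  using Par_perm permutes_in_image by fastforce

lemma edg_simp: "edg s ((j,a,b),r) = {(Suc j, a * cellsz j + r), (j, b * cellsz j + s (j,a,b) r)}"
  by (simp add: edg_def)

lemma edg_inj:
  assumes s: "s \<in> Par" and t: "t \<in> Par" and q: "((j,a,b),r) \<in> Idx" and q': "((j',a',b'),r') \<in> Idx"
    and eq: "edg s ((j,a,b),r) = edg t ((j',a',b'),r')"
  shows "j = j' \<and> a = a' \<and> b = b' \<and> r = r' \<and> s (j,a,b) r = t (j',a',b') r'"
proof -
  have ix: "(j,a,b) \<in> Ix" "r < cellsz j" "(j',a',b') \<in> Ix" "r' < cellsz j'"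
    using q q' by (auto simp: Idx_def)
  have lt: "s (j,a,b) r < cellsz j" "t (j',a',b') r' < cellsz j'"
    using Par_lt[OF s ix(1,2)] Par_lt[OF t ix(3,4)] by auto
  from eq have "{(Suc j, a * cellsz j + r), (j, b * cellsz j + s (j,a,b) r)}
      = {(Suc j', a' * cellsz j' + r'), (j', b' * cellsz j' + t (j',a',b') r')}" by (simp add: edg_simp)
  then have "(Suc j, a * cellsz j + r) = (Suc j', a' * cellsz j' + r') \<and> (j, b * cellsz j + s (j,a,b) r) = (j', b' * cellsz j' + t (j',a',b') r')
     \<or> (Suc j, a * cellsz j + r) = (j', b' * cellsz j' + t (j',a',b') r') \<and> (j, b * cellsz j + s (j,a,b) r) = (Suc j', a' * cellsz j' + r')"
    by (simp add: doubleton_eq_iff)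
  then have h: "j = j'" "a * cellsz j + r = a' * cellsz j + r'" "b * cellsz j + s (j,a,b) r = b' * cellsz j + t (j',a',b') r'"
    by auto
  have "r' < cellsz j" using ix(4) h(1) by simp
  then have "a = a' \<and> r = r'" using lin_inj[OF ix(2) _ h(2)] by blast
  moreover have "t (j',a',b') r' < cellsz j" using lt(2) h(1) by simp
  then have "b = b' \<and> s (j,a,b) r = t (j',a',b') r'" using lin_inj[OF lt(1) _ h(3)] by blast
  ultimately show ?thesis using h(1) by auto
qed

lemma Ix_mem: "(j,a,b) \<in> Ix \<longleftrightarrow> j < T \<and> a \<le> D \<and> b < D"
  by (auto simp: Ix_def)

lemma Idx_mem: "((j,a,b),r) \<in> Idx \<longleftrightarrow> j < T \<and> a \<le> D \<and> b < D \<and> r < cellsz j"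
  by (auto simp: Idx_def Ix_def)

lemma Vt_mem: "(j,p) \<in> Vt \<longleftrightarrow> j \<le> T \<and> p < lvl j"
  by (auto simp: Vt_def)

lemma lt_mult_aux:
  fixes a r x K :: nat assumes "r < x" "a < K"
  shows "a * x + r < K * x"
proof -
  have "a * x + r < a * x + x" using assms by simp
  also have "\<dots> = Suc a * x" by simp
  also have "\<dots> \<le> K * x" using assms by (intro mult_right_mono) auto
  finally show ?thesis .
qed

lemma edg_in_Vt:
  assumes s: "s \<in> Par" and q: "((j,a,b),r) \<in> Idx"
  shows "(Suc j, a * cellsz j + r) \<in> Vt" "(j, b * cellsz j + s (j,a,b) r) \<in> Vt"
proof -
  have h: "j < T" "a \<le> D" "b < D" "r < cellsz j" using q by (auto simp: Idx_mem)
  have "a * cellsz j + r < (D+1) * cellsz j" using lt_mult_aux[OF h(4), of a "D+1"] h(2) by simp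
  then show "(Suc j, a * cellsz j + r) \<in> Vt" using h(1) by (simp add: Vt_mem lvl_eq2)
  have "s (j,a,b) r < cellsz j" using Par_lt[OF s _ h(4)] h by (simp add: Ix_mem)
  then have "b * cellsz j + s (j,a,b) r < D * cellsz j" using lt_mult_aux h(3) by blast
  then show "(j, b * cellsz j + s (j,a,b) r) \<in> Vt" using h(1) by (simp add: Vt_mem lvl_eq1)
qed

lemma Gr_simple: "s \<in> Par \<Longrightarrow> e \<in> Gr s \<Longrightarrow> \<exists>u v. u \<in> Vt \<and> v \<in> Vt \<and> u \<noteq> v \<and> e = {u, v}"
proof -
  assume s: "s \<in> Par" and e: "e \<in> Gr s"
  then obtain q where q: "q \<in> Idx" and eq: "e = edg s q" unfolding Gr_def by blast
  obtain j a b r where qq: "q = ((j,a,b),r)" by (metis prod.collapse)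
  have "(Suc j, a * cellsz j + r) \<noteq> (j, b * cellsz j + s (j,a,b) r)" by simp
  then show ?thesis using edg_in_Vt[OF s q[unfolded qq]] eq qq edg_simp by blast
qed

lemma Gr_sub: "s \<in> Par \<Longrightarrow> e \<in> Gr s \<Longrightarrow> e \<subseteq> Vt"
  using Gr_simple by blast

lemma Gr_cover:
  assumes s: "s \<in> Par" and v: "v \<in> Vt"
  shows "\<exists>e\<in>Gr s. v \<in> e"
proof -
  obtain j p where vjp: "v = (j,p)" by (cases v)
  have jp: "j \<le> T" "p < lvl j" using v vjp by (auto simp: Vt_mem)
  show ?thesis
  proof (cases "j < T")
    case True
    define x where "x = cellsz j"
    have xp: "x > 0" by (simp add: x_def cellsz_pos)
    define b where "b = p div x"
    define q where "q = p mod x"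
    have pl: "p < D * x" using jp True by (simp add: lvl_eq1 x_def)
    have bD: "b < D" using pl xp by (simp add: b_def less_mult_imp_div_less)
    have qx: "q < x" using xp by (simp add: q_def)
    have ix: "(j,0,b) \<in> Ix" using True bD by (simp add: Ix_mem)
    have perm: "s (j,0,b) permutes {..<x}" using Par_perm[OF s ix] by (simp add: x_def)
    define r where "r = inv (s (j,0,b)) q"
    have rx: "r < x" using permutes_in_image[OF permutes_inv[OF perm]] qx by (simp add: r_def)
    have sr: "s (j,0,b) r = q" using permutes_inverses(1)[OF perm] by (simp add: r_def)
    have qi: "((j,0,b),r) \<in> Idx" using True bD rx by (simp add: Idx_mem x_def)
    have "v \<in> edg s ((j,0,b),r)" using sr by (simp add: edg_simp vjp b_def q_def x_def[symmetric])
    then show ?thesis using qi unfolding Gr_def by blast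
  next
    case False
    then have jT: "j = T" using jp by simp
    then obtain j' where j': "j = Suc j'" using T1 by (cases j) auto
    have j'T: "j' < T" using jT j' by simp
    define x where "x = cellsz j'"
    have xp: "x > 0" by (simp add: x_def cellsz_pos)
    define a where "a = p div x"
    define r where "r = p mod x"
    have pl: "p < (D+1) * x" using jp j'T j' by (simp add: lvl_eq2 x_def)
    have aD: "a \<le> D" using less_mult_imp_div_less[OF pl] by (simp add: a_def)
    have rx: "r < x" using xp by (simp add: r_def)
    have qi: "((j',a,0),r) \<in> Idx" using j'T aD rx D1 by (simp add: Idx_mem x_def)
    have "v \<in> edg s ((j',a,0),r)" by (simp add: edg_simp vjp j' a_def r_def x_def[symmetric])
    then show ?thesis using qi unfolding Gr_def by blast
  qed
qed

lemma Gr_Union: "s \<in> Par \<Longrightarrow> \<Union>(Gr s) = Vt"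
  using Gr_sub Gr_cover by blast

lemma finite_Idx: "finite Idx"
  unfolding Idx_def Ix_def by auto

lemma finite_Vt: "finite Vt"
  unfolding Vt_def by auto

lemma card_Gr: assumes s: "s \<in> Par" shows "card (Gr s) = card Idx"
proof -
  have "inj_on (edg s) Idx"
  proof
    fix q q' assume q: "q \<in> Idx" and q': "q' \<in> Idx" and eq: "edg s q = edg s q'"
    obtain j a b r where qq: "q = ((j,a,b),r)" by (metis prod.collapse)
    obtain j' a' b' r' where qq': "q' = ((j',a',b'),r')" by (metis prod.collapse)
    show "q = q'" using edg_inj[OF s s q[unfolded qq] q'[unfolded qq'] eq[unfolded qq qq']] qq qq' by simp
  qed
  then show ?thesis unfolding Gr_def by (rule card_image)
qed

lemma card_Idx: "card Idx = D * (D+1) * (\<Sum>j<T. cellsz j)"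
proof -
  have "card Idx = (\<Sum>i\<in>Ix. cellsz (fst i))" unfolding Idx_def
    by (subst card_SigmaI) (auto simp: Ix_def)
  also have "\<dots> = (\<Sum>j<T. \<Sum>y\<in>{..D} \<times> {..<D}. cellsz j)"
    unfolding Ix_def by (subst sum.cartesian_product) (simp add: case_prod_beta)
  also have "\<dots> = (\<Sum>j<T. (D+1) * D * cellsz j)" by simp
  also have "\<dots> = D * (D+1) * (\<Sum>j<T. cellsz j)" by (simp add: sum_distrib_left mult.commute)
  finally show ?thesis .
qed

lemma card_Vt: "card Vt = (\<Sum>j\<le>T. lvl j)"
  unfolding Vt_def by (subst card_SigmaI) auto

lemma card_Par: "card Par = (\<Prod>j<T. fact (cellsz j) ^ (D*(D+1)))"
proof -
  have "card Par = (\<Prod>i\<in>Ix. card {s. s permutes {..<cellsz (fst i)}})"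
    unfolding Par_def by (rule card_PiE) (simp add: Ix_def)
  also have "\<dots> = (\<Prod>i\<in>Ix. fact (cellsz (fst i)))"
    by (intro prod.cong refl card_permutations) auto
  also have "\<dots> = (\<Prod>j<T. \<Prod>y\<in>{..D} \<times> {..<D}. fact (cellsz j))"
    unfolding Ix_def by (subst prod.cartesian_product) (simp add: case_prod_beta)
  also have "\<dots> = (\<Prod>j<T. fact (cellsz j) ^ (D*(D+1)))" by (simp add: mult.commute)
  finally show ?thesis .
qed

lemma inj_Gr: "inj_on Gr Par"
proof
  fix s t assume s: "s \<in> Par" and t: "t \<in> Par" and eq: "Gr s = Gr t"
  show "s = t"
  proof
    fix i
    show "s i = t i"
    proof (cases "i \<in> Ix")
      case False
      have "s i = undefined" using s False unfolding Par_def by (rule PiE_arb)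
      moreover have "t i = undefined" using t False unfolding Par_def by (rule PiE_arb)
      ultimately show ?thesis by simp
    next
      case True
      obtain j a b where ij: "i = (j,a,b)" by (metis prod.collapse)
      have ps: "s (j,a,b) permutes {..<cellsz j}" using Par_perm[OF s] True ij by simp
      have pt: "t (j,a,b) permutes {..<cellsz j}" using Par_perm[OF t] True ij by simp
      show ?thesis
      proof
        fix r show "s i r = t i r"
        proof (cases "r < cellsz j")
          case True2: True
          have q: "((j,a,b),r) \<in> Idx" using True True2 ij by (simp add: Idx_mem Ix_mem)
          then have "edg s ((j,a,b),r) \<in> Gr s" unfolding Gr_def by (rule imageI)
          then have "edg s ((j,a,b),r) \<in> edg t ` Idx" using eq unfolding Gr_def by simp
          then obtain q' where q': "q' \<in> Idx" and e: "edg s ((j,a,b),r) = edg t q'" by (rule imageE) auto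
          obtain j' a' b' r' where qq': "q' = ((j',a',b'),r')" by (metis prod.collapse)
          have "s (j,a,b) r = t (j',a',b') r' \<and> j = j' \<and> a = a' \<and> b = b' \<and> r = r'"
            using edg_inj[OF s t q q'[unfolded qq'] e[unfolded qq']] by blast
          then show ?thesis using ij by blast
        next
          case False
          then have "r \<notin> {..<cellsz j}" by simp
          then show ?thesis using permutes_not_in[OF ps] permutes_not_in[OF pt] ij by simp
        qed
      qed
    qed
  qed
qed

definition Fw :: "((nat \<times> nat \<times> nat) \<Rightarrow> nat \<Rightarrow> nat) \<Rightarrow> nat \<times> nat \<Rightarrow> (nat \<times> nat) set" where
  "Fw s v = (\<lambda>a. (Suc (fst v), a * cellsz (fst v)
      + inv (s (fst v, a, snd v div cellsz (fst v))) (snd v mod cellsz (fst v)))) ` {..D}"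
definition Bw :: "((nat \<times> nat \<times> nat) \<Rightarrow> nat \<Rightarrow> nat) \<Rightarrow> nat \<times> nat \<Rightarrow> (nat \<times> nat) set" where
  "Bw s v = (\<lambda>b. (fst v - 1, b * cellsz (fst v - 1)
      + s (fst v - 1, snd v div cellsz (fst v - 1), b) (snd v mod cellsz (fst v - 1)))) ` {..<D}"

lemma card_Fw: "card (Fw s v) \<le> D + 1"
  unfolding Fw_def by (rule order_trans[OF card_image_le]) simp_all

lemma card_Bw: "card (Bw s v) \<le> D"
  unfolding Bw_def by (rule order_trans[OF card_image_le]) simp_all

lemma nbr:
  assumes s: "s \<in> Par" and e: "{u, (j,p)} \<in> Gr s"
  shows "(fst u = Suc j \<and> u \<in> Fw s (j,p)) \<or> (Suc (fst u) = j \<and> u \<in> Bw s (j,p))"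
proof -
  obtain q where q: "q \<in> Idx" and eq: "{u, (j,p)} = edg s q" using e unfolding Gr_def image_iff by blast
  obtain j' a b r where qq: "q = ((j',a,b),r)" by (metis prod.collapse)
  have h: "j' < T" "a \<le> D" "b < D" "r < cellsz j'" using q qq by (auto simp: Idx_mem)
  have ix: "(j',a,b) \<in> Ix" using h by (simp add: Ix_mem)
  have perm: "s (j',a,b) permutes {..<cellsz j'}" using Par_perm[OF s ix] .
  have slt: "s (j',a,b) r < cellsz j'" using Par_lt[OF s ix h(4)] .
  have "{u, (j,p)} = {(Suc j', a * cellsz j' + r), (j', b * cellsz j' + s (j',a,b) r)}"
    using eq unfolding qq edg_simp .
  then have cases: "(u = (Suc j', a * cellsz j' + r) \<and> (j,p) = (j', b * cellsz j' + s (j',a,b) r))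
     \<or> (u = (j', b * cellsz j' + s (j',a,b) r) \<and> (j,p) = (Suc j', a * cellsz j' + r))"
    by (simp only: doubleton_eq_iff)
  then show ?thesis
  proof
    assume A: "u = (Suc j', a * cellsz j' + r) \<and> (j,p) = (j', b * cellsz j' + s (j',a,b) r)"
    then have jj: "j = j'" and pp: "p = b * cellsz j' + s (j',a,b) r" by auto
    have bd: "p div cellsz j' = b" using divmod_unique_aux(1)[OF slt] pp by simp
    have md: "p mod cellsz j' = s (j',a,b) r" using divmod_unique_aux(2)[OF slt] pp by simp
    have "inv (s (j',a,b)) (s (j',a,b) r) = r" using permutes_inverses(2)[OF perm] by simp
    then have "u = (\<lambda>a. (Suc (fst (j,p)), a * cellsz (fst (j,p))
      + inv (s (fst (j,p), a, snd (j,p) div cellsz (fst (j,p)))) (snd (j,p) mod cellsz (fst (j,p))))) a"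
      using A jj bd md by simp
    then have "u \<in> Fw s (j,p)" unfolding Fw_def by (rule image_eqI) (use h(2) in simp)
    then show ?thesis using A jj by simp
  next
    assume B: "u = (j', b * cellsz j' + s (j',a,b) r) \<and> (j,p) = (Suc j', a * cellsz j' + r)"
    then have jj: "j = Suc j'" and pp: "p = a * cellsz j' + r" by auto
    have ad: "p div cellsz j' = a" using divmod_unique_aux(1)[OF h(4)] pp by simp
    have md: "p mod cellsz j' = r" using divmod_unique_aux(2)[OF h(4)] pp by simp
    have "u = (\<lambda>b. (fst (j,p) - 1, b * cellsz (fst (j,p) - 1)
      + s (fst (j,p) - 1, snd (j,p) div cellsz (fst (j,p) - 1), b) (snd (j,p) mod cellsz (fst (j,p) - 1)))) b"
      using B jj ad md by simp
    then have "u \<in> Bw s (j,p)" unfolding Bw_def by (rule image_eqI) (use h(3) in simp)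
    then show ?thesis using B jj by simp
  qed
qed

lemma Gr_degenerate: assumes s: "s \<in> Par" shows "degenerate D Vt (Gr s)"
  unfolding degenerate_def
proof (intro allI impI)
  fix S' assume S': "S' \<subseteq> Vt \<and> S' \<noteq> {}"
  have fin: "finite S'" using S' finite_Vt finite_subset by blast
  define mj where "mj = Max (fst ` S')"
  have "mj \<in> fst ` S'" unfolding mj_def using fin S' by (intro Max_in) auto
  then obtain v where v: "v \<in> S'" "fst v = mj" by auto
  have vmax: "\<And>u. u \<in> S' \<Longrightarrow> fst u \<le> fst v" using fin v(2) unfolding mj_def by simp
  obtain j p where vjp: "v = (j,p)" by (cases v)
  have "{u \<in> S'. {u, v} \<in> Gr s} \<subseteq> Bw s v"
  proof
    fix u assume u: "u \<in> {u \<in> S'. {u, v} \<in> Gr s}"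
    then have "(fst u = Suc j \<and> u \<in> Fw s (j,p)) \<or> (Suc (fst u) = j \<and> u \<in> Bw s (j,p))"
      using nbr[OF s] vjp by simp
    moreover have "fst u \<le> j" using vmax[of u] u vjp by simp
    ultimately show "u \<in> Bw s v" using vjp by auto
  qed
  moreover have "finite (Bw s v)" unfolding Bw_def by simp
  ultimately have "card {u \<in> S'. {u, v} \<in> Gr s} \<le> card (Bw s v)" by (intro card_mono)
  then have "card {u \<in> S'. {u, v} \<in> Gr s} \<le> D" using card_Bw[of s v] by linarith
  then show "\<exists>v\<in>S'. deg_in S' (Gr s) v \<le> D" using v(1) unfolding deg_in_def by blast
qed

lemma Gr_maxdeg: assumes s: "s \<in> Par" shows "max_degree_le (2 * D + 1) Vt (Gr s)"
  unfolding max_degree_le_def deg_in_def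
proof
  fix v assume "v \<in> Vt"
  obtain j p where vjp: "v = (j,p)" by (cases v)
  have "{u \<in> Vt. {u, v} \<in> Gr s} \<subseteq> Fw s v \<union> Bw s v"
  proof
    fix u assume "u \<in> {u \<in> Vt. {u, v} \<in> Gr s}"
    then have "{u, (j,p)} \<in> Gr s" using vjp by simp
    from nbr[OF s this] show "u \<in> Fw s v \<union> Bw s v" using vjp by blast
  qed
  moreover have "finite (Fw s v \<union> Bw s v)" unfolding Fw_def Bw_def by simp
  ultimately have "card {u \<in> Vt. {u, v} \<in> Gr s} \<le> card (Fw s v \<union> Bw s v)" by (rule card_mono[rotated])
  also have "\<dots> \<le> card (Fw s v) + card (Bw s v)" by (rule card_Un_le)
  also have "\<dots> \<le> 2 * D + 1" using card_Fw[of s v] card_Bw[of s v] by simp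
  finally show "card {u \<in> Vt. {u, v} \<in> Gr s} \<le> 2 * D + 1" .
qed

end

theorem theorem1p2:
  fixes D :: nat
  assumes "D \<ge> 1"
  shows "\<exists>n0::nat. \<forall>n\<ge>n0. \<forall>(V :: nat set) (E :: nat set set).
           simple_graph V E \<and>
           (\<forall>EH :: nat set set. simple_graph {0..<n} EH \<and> degenerate D {0..<n} EH
               \<and> max_degree_le (2 * D + 1) {0..<n} EH
               \<longrightarrow> contains_subgraph V E {0..<n} EH)
           \<longrightarrow> real (num_edges E) \<ge> 1 / (1000 * real D) * real n powr (2 - 1 / real D)"
proof -
  have D1: "D \<ge> 1" by (rule assms)
  obtain n0 where n0: "\<forall>n\<ge>n0. \<exists>T. T \<ge> 1 \<and> 10 * QQ D T \<le> n
        \<and> real D ^ T * (ln (real n) + real D ^ 2 + 2 * real D) \<le> real (QQ D T) \<and> ln (real n) \<ge> 10"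
    using params_exist[OF D1] by blast
  show ?thesis
  proof (rule exI[of _ n0], intro allI impI)
    fix n :: nat and V :: "nat set" and E :: "nat set set"
    assume nn: "n \<ge> n0"
    assume H: "simple_graph V E \<and>
           (\<forall>EH :: nat set set. simple_graph {0..<n} EH \<and> degenerate D {0..<n} EH
               \<and> max_degree_le (2 * D + 1) {0..<n} EH
               \<longrightarrow> contains_subgraph V E {0..<n} EH)"
    obtain T where T1: "T \<ge> 1" and TQ: "10 * QQ D T \<le> n"
      and TL: "real D ^ T * (ln (real n) + real D ^ 2 + 2 * real D) \<le> real (QQ D T)"
      and lnn: "ln (real n) \<ge> 10"
      using n0 nn by blast
    define Q where "Q = QQ D T"
    have Q1: "Q \<ge> 1"
    proof -
      have "(1::real) \<le> (real D + 1) ^ T" by simp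
      also have "\<dots> \<le> real Q" using QQ_bounds(2)[of D T] by (simp add: Q_def)
      finally show ?thesis by simp
    qed
    define c where "c = n div Q"
    have nQ: "n = c * Q + n mod Q" by (simp add: c_def)
    have modQ: "n mod Q < Q" using Q1 by simp
    have c1: "c \<ge> 1"
    proof (rule ccontr)
      assume "\<not> c \<ge> 1"
      then have "c = 0" by simp
      then have "n < Q" using nQ modQ by simp
      then show False using TQ Q1 unfolding Q_def by simp
    qed
    interpret constr D T c using D1 T1 c1 by unfold_locales auto
    define K where "K = (\<Sum>j<T. cellsz j)"
    define k where "k = D * (D+1) * K"
    define l0 where "l0 = c * D ^ T"
    define N where "N = l0 + (D+1) * K"
    have NVt: "card Vt = N"
    proof -
      have "card Vt = lvl 0 + (\<Sum>j<T. lvl (Suc j))" unfolding card_Vt by (rule sum.atMost_shift)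
      also have "(\<Sum>j<T. lvl (Suc j)) = (\<Sum>j<T. (D+1) * cellsz j)" by (intro sum.cong refl) (simp add: lvl_eq2)
      also have "\<dots> = (D+1) * K" by (simp add: K_def sum_distrib_left)
      finally show ?thesis by (simp add: N_def l0_def lvl_def)
    qed
    have NcQ: "N = c * Q"
    proof -
      have "K = c * (\<Sum>j<T. D ^ (T - Suc j) * (D+1) ^ j)"
        by (simp add: K_def cellsz_def sum_distrib_left mult.assoc)
      then show ?thesis by (simp add: N_def l0_def Q_def QQ_def algebra_simps)
    qed
    have Nn: "N \<le> n" using nQ NcQ by linarith
    have Nn2: "9 * n \<le> 10 * N" using nQ NcQ modQ TQ unfolding Q_def by linarith
    have l0small: "real l0 * (ln (real n) + real D ^ 2 + 2 * real D) \<le> real N"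
    proof -
      have "real l0 * (ln (real n) + real D ^ 2 + 2 * real D) = real c * (real D ^ T * (ln (real n) + real D ^ 2 + 2 * real D))"
        by (simp add: l0_def)
      also have "\<dots> \<le> real c * real Q" using TL by (intro mult_left_mono) (auto simp: Q_def)
      also have "\<dots> = real N" by (simp add: NcQ)
      finally show ?thesis .
    qed
    have finE: "finite E"
    proof -
      have sg: "simple_graph V E" using H by (rule conjunct1)
      have "finite V" using sg unfolding simple_graph_def by (rule conjunct1)
      have ed: "\<forall>e\<in>E. \<exists>u v. u \<in> V \<and> v \<in> V \<and> u \<noteq> v \<and> e = {u, v}"
        using sg unfolding simple_graph_def by (rule conjunct2)
      have "E \<subseteq> Pow V"
      proof
        fix e assume "e \<in> E"
        then obtain u v where "u \<in> V" "v \<in> V" "e = {u, v}" using ed by blast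
        then show "e \<in> Pow V" by simp
      qed
      then show ?thesis using \<open>finite V\<close> finite_subset by blast
    qed
    obtain h where h: "bij_betw h Vt {0..<card Vt}" using ex_bij_betw_finite_nat[OF finite_Vt] by blast
    have hinj: "inj_on h Vt" using h by (simp add: bij_betw_def)
    have hS: "h ` Vt \<subseteq> {0..<n}" using h NVt Nn by (auto simp: bij_betw_def)
    have emb: "\<exists>g. inj_on g Vt \<and> (\<forall>e\<in>G. g ` e \<in> E)" if G: "G \<in> Gr ` Par" for G
    proof -
      obtain s where s: "s \<in> Par" and Gs: "G = Gr s" using G by blast
      have tr: "simple_graph {0..<n} ((`) h ` Gr s) \<and> degenerate D {0..<n} ((`) h ` Gr s)
         \<and> max_degree_le (2 * D + 1) {0..<n} ((`) h ` Gr s)"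
        by (rule transfer_graph[OF hinj hS finite_Vt Gr_simple[OF s] Gr_degenerate[OF s] Gr_maxdeg[OF s]])
      then have "contains_subgraph V E {0..<n} ((`) h ` Gr s)" using H[THEN conjunct2, rule_format] by blast
      then obtain f where f: "inj_on f {0..<n}" "\<forall>e\<in>(`) h ` Gr s. f ` e \<in> E"
        unfolding contains_subgraph_def by blast
      have "inj_on (f \<circ> h) Vt"
        using hinj f(1) hS by (intro comp_inj_on) (auto intro: inj_on_subset)
      moreover have "\<forall>e\<in>G. (f \<circ> h) ` e \<in> E"
      proof
        fix e assume "e \<in> G"
        then have "f ` (h ` e) \<in> E" using f(2) Gs by blast
        then show "(f \<circ> h) ` e \<in> E" by (simp add: image_comp)
      qed
      ultimately show ?thesis by blast
    qed
    have props: "card G = k \<and> \<Union>G = Vt" if G: "G \<in> Gr ` Par" for G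
    proof -
      obtain s where s: "s \<in> Par" and Gs: "G = Gr s" using G by blast
      show ?thesis using card_Gr[OF s] card_Idx Gr_Union[OF s] Gs by (simp add: k_def K_def)
    qed
    have cntF: "card (Gr ` Par) \<le> (card E choose k) * card Vt ^ card Vt"
      by (rule count_embed[OF finite_Vt finE props emb])
    have "card (Gr ` Par) = card Par" by (rule card_image[OF inj_Gr])
    then have cnt: "(\<Prod>j<T. fact (cellsz j) ^ (D*(D+1))) \<le> (card E choose k) * N ^ N"
      using cntF card_Par NVt by simp
    have "real (card E) \<ge> 1 / (1000 * real D) * real n powr (2 - 1 / real D)"
      by (rule numeric_main[OF D1 T1 c1 cellsz_def K_def k_def l0_def N_def cnt Nn Nn2 l0small lnn])
    then show "real (num_edges E) \<ge> 1 / (1000 * real D) * real n powr (2 - 1 / real D)"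
      by (simp add: num_edges_def)
  qed
qed

end
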